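(* Consider the model, design and estimator described in the context. For any $r,\ell\ge0$, $i,i'\in U$ and $t,t'\in[T]$, \[{\rm Cov}\big(\widehat\Delta^r_{it},\widehat\Delta^r_{i't'}\big)\le\frac{4(1+\sigma^2)}{p^r_{it}\,p^r_{i't'}}.\]
   Context: Model. There are $N$ individuals forming the vertex set $U$ ($|U|=N$) of an undirected interference graph $G=(U,E)$, and $T$ rounds $[T]=\{1,\dots,T\}$. For $i\in U$ let $\mathcal N(i)=\{i\}\cup\{j\in U:(i,j)\in E\}$. A treatment matrix $W\in\{0,1\}^{N\times T}$ is drawn at the beginning, independently of all other randomness. Each individual $i$ has a state $S_{it}$ in a state space $\mathcal S$; conditionally on $W$ the states evolve as Markov chains with $S_{i,t+1}\sim P_{it}^{W_{\mathcal N(i),t}}(\cdot\mid S_{it})$. Observed outcomes are $Y_{it}=\mu_{it}(S_{it},W_{\mathcal N(i),t})+\epsilon_{it}$, where $\mu_{it}:\mathcal S\times\{0,1\}^{\mathcal N(i)}\to[0,1]$. Uncorrelated noise: there is a constant $\sigma$ such that, with $S=(S_{it})$, $\mathbb E[\epsilon_{it}\mid S,W]=0$ and $\mathbb E[\epsilon_{it}\epsilon_{i't'}\mid S,W]\le\sigma^2\mathbbm 1(i=i',t=t')$. A fixed parameter $\delta\in[0,1)$ is used in the exposure mapping. Design (clustered switchback): $\Pi$ is a partition of $U$ into clusters; $[T]$ is partitioned into consecutive time blocks of length $\ell$ (the last possibly shorter); for each cluster $C\in\Pi$ and block $B$, independently $A_{CB}\sim{\rm Ber}(1/2)$, and $W_{it}=A_{CB}$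 for $(i,t)\in C\times B$. Estimator: $X^r_{ita}(W)=\prod_{t'=t-r}^{t}\mathbbm 1\Big(\frac{\sum_{i'\in\mathcal N(i)}\mathbbm 1(W_{i't'}=a)}{|\mathcal N(i)|}\ge1-\delta\Big)$, $p^r_{ita}=\mathbb P[X^r_{ita}=1]$; since treatment and control are equally likely, $p^r_{it0}=p^r_{it1}$, and this common value is denoted $p^r_{it}$. $\widehat\Delta^r_{it}=\frac{X^r_{it1}}{p^r_{it1}}Y_{it}-\frac{X^r_{it0}}{p^r_{it0}}Y_{it}$. *)

theory Defs
  imports "HOL-Probability.Probability" "HOL-Library.Disjoint_Sets"
begin

definition nbhd :: "'a set \<Rightarrow> ('a \<Rightarrow> 'a \<Rightarrow> bool) \<Rightarrow> 'a \<Rightarrow> 'a set" where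
  "nbhd U E i = insert i {j \<in> U. E i j}"

definition gen_sigma :: "'w measure \<Rightarrow> 'b measure \<Rightarrow> ('k \<Rightarrow> 'w \<Rightarrow> 'b) \<Rightarrow> 'k set \<Rightarrow> 'w measure" where
  "gen_sigma M N X K = sigma (space M) {X k -` B \<inter> space M | k B. k \<in> K \<and> B \<in> sets N}"

definition block_of :: "nat \<Rightarrow> nat \<Rightarrow> nat" where
  "block_of l t = (t - 1) div l"

definition clustered_switchback ::
  "'w measure \<Rightarrow> 'a set \<Rightarrow> 'a set set \<Rightarrow> nat \<Rightarrow> nat \<Rightarrow> ('a \<Rightarrow> nat \<Rightarrow> 'w \<Rightarrow> bool) \<Rightarrow> bool" where
  "clustered_switchback M U Cl T l W \<longleftrightarrow>
     (\<exists>A :: 'a set \<Rightarrow> nat \<Rightarrow> 'w \<Rightarrow> bool.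
        prob_space.indep_vars M (\<lambda>_. count_space UNIV) (\<lambda>(C, b). A C b)
          (Cl \<times> block_of l ` {1..T})
      \<and> (\<forall>C\<in>Cl. \<forall>b\<in>block_of l ` {1..T}. measure M {\<omega> \<in> space M. A C b \<omega>} = 1/2)
      \<and> (\<forall>C\<in>Cl. \<forall>i\<in>C. \<forall>t\<in>{1..T}. \<forall>\<omega>\<in>space M. W i t \<omega> = A C (block_of l t) \<omega>))"

(* Treatment vector of the neighbourhood, W_{N(i),t} \<in> {0,1}^{N(i)} (set to False outside N(i)) *)
definition wN :: "'a set \<Rightarrow> ('a \<Rightarrow> 'a \<Rightarrow> bool) \<Rightarrow> ('a \<Rightarrow> nat \<Rightarrow> 'w \<Rightarrow> bool) \<Rightarrow> 'a \<Rightarrow> nat \<Rightarrow> 'w \<Rightarrow> 'a \<Rightarrow> bool" where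
  "wN U E W i t \<omega> = (\<lambda>j. if j \<in> nbhd U E i then W j t \<omega> else False)"

(* Exposure indicator X^r_{ita}(W); rounds t' < 1 (outside [T]) are omitted from the product *)
definition expo :: "'a set \<Rightarrow> ('a \<Rightarrow> 'a \<Rightarrow> bool) \<Rightarrow> real \<Rightarrow> ('a \<Rightarrow> nat \<Rightarrow> 'w \<Rightarrow> bool)
     \<Rightarrow> nat \<Rightarrow> 'a \<Rightarrow> nat \<Rightarrow> bool \<Rightarrow> 'w \<Rightarrow> real" where
  "expo U E \<delta> W r i t a \<omega> =
     (\<Prod>t'\<in>{t - r..t} \<inter> {1..}.
        of_bool (real (card {i' \<in> nbhd U E i. W i' t' \<omega> = a}) / real (card (nbhd U E i)) \<ge> 1 - \<delta>))"

definition pexpo :: "'w measure \<Rightarrow> 'a set \<Rightarrow> ('a \<Rightarrow> 'a \<Rightarrow> bool) \<Rightarrow> real \<Rightarrow> ('a \<Rightarrow> nat \<Rightarrow> 'w \<Rightarrow> bool)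
     \<Rightarrow> nat \<Rightarrow> 'a \<Rightarrow> nat \<Rightarrow> bool \<Rightarrow> real" where
  "pexpo M U E \<delta> W r i t a = measure M {\<omega> \<in> space M. expo U E \<delta> W r i t a \<omega> = 1}"

definition outcome :: "'a set \<Rightarrow> ('a \<Rightarrow> 'a \<Rightarrow> bool) \<Rightarrow> ('a \<Rightarrow> nat \<Rightarrow> 's \<Rightarrow> ('a \<Rightarrow> bool) \<Rightarrow> real)
     \<Rightarrow> ('a \<Rightarrow> nat \<Rightarrow> 'w \<Rightarrow> 's) \<Rightarrow> ('a \<Rightarrow> nat \<Rightarrow> 'w \<Rightarrow> bool) \<Rightarrow> ('a \<Rightarrow> nat \<Rightarrow> 'w \<Rightarrow> real)
     \<Rightarrow> 'a \<Rightarrow> nat \<Rightarrow> 'w \<Rightarrow> real" where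
  "outcome U E mu S W eps i t \<omega> = mu i t (S i t \<omega>) (wN U E W i t \<omega>) + eps i t \<omega>"

definition ht_est :: "'w measure \<Rightarrow> 'a set \<Rightarrow> ('a \<Rightarrow> 'a \<Rightarrow> bool) \<Rightarrow> real
     \<Rightarrow> ('a \<Rightarrow> nat \<Rightarrow> 's \<Rightarrow> ('a \<Rightarrow> bool) \<Rightarrow> real) \<Rightarrow> ('a \<Rightarrow> nat \<Rightarrow> 'w \<Rightarrow> 's)
     \<Rightarrow> ('a \<Rightarrow> nat \<Rightarrow> 'w \<Rightarrow> bool) \<Rightarrow> ('a \<Rightarrow> nat \<Rightarrow> 'w \<Rightarrow> real)
     \<Rightarrow> nat \<Rightarrow> 'a \<Rightarrow> nat \<Rightarrow> 'w \<Rightarrow> real" where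
  "ht_est M U E \<delta> mu S W eps r i t \<omega> =
     expo U E \<delta> W r i t True \<omega> / pexpo M U E \<delta> W r i t True * outcome U E mu S W eps i t \<omega>
   - expo U E \<delta> W r i t False \<omega> / pexpo M U E \<delta> W r i t False * outcome U E mu S W eps i t \<omega>"

definition covar :: "'w measure \<Rightarrow> ('w \<Rightarrow> real) \<Rightarrow> ('w \<Rightarrow> real) \<Rightarrow> real" where
  "covar M X Y = (\<integral>\<omega>. X \<omega> * Y \<omega> \<partial>M) - (\<integral>\<omega>. X \<omega> \<partial>M) * (\<integral>\<omega>. Y \<omega> \<partial>M)"

end

theory Submission
  imports Defs
begin

lemma prod_of_bool_real:
  "finite A \<Longrightarrow> (\<Prod>x\<in>A. (of_bool (P x) :: real)) = of_bool (\<forall>x\<in>A. P x)"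
  by (induction A rule: finite_induct) auto

lemma expo_eq:
  "expo U E \<delta> W r i t a \<omega> = of_bool (\<forall>s\<in>{t - r..t} \<inter> {1..}.
      1 - \<delta> \<le> real (card {i' \<in> nbhd U E i. W i' s \<omega> = a}) / real (card (nbhd U E i)))"
  unfolding expo_def by (rule prod_of_bool_real) auto

lemma expo_01: "expo U E \<delta> W r i t a \<omega> = 0 \<or> expo U E \<delta> W r i t a \<omega> = 1"
  unfolding expo_eq by (simp add: of_bool_def)

lemma finite_nbhd: "finite U \<Longrightarrow> finite (nbhd U E i)"
  unfolding nbhd_def by simp

lemma expo_meas:
  assumes U: "finite U"
    and Wm: "\<And>j s. j \<in> nbhd U E i \<Longrightarrow> s \<in> {t - r..t} \<inter> {1..} \<Longrightarrow> W j s \<in> measurable F (count_space UNIV)"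
  shows "expo U E \<delta> W r i t a \<in> borel_measurable F"
proof -
  have c: "(\<lambda>\<omega>. real (card {i' \<in> nbhd U E i. W i' s \<omega> = a})) \<in> borel_measurable F"
    if s: "s \<in> {t - r..t} \<inter> {1..}" for s
  proof -
    have eq: "(\<lambda>\<omega>. real (card {i' \<in> nbhd U E i. W i' s \<omega> = a})) =
       (\<lambda>\<omega>. \<Sum>j\<in>nbhd U E i. (of_bool (W j s \<omega> = a) :: real))"
    proof
      fix \<omega>
      have "{i' \<in> nbhd U E i. W i' s \<omega> = a} = nbhd U E i \<inter> {j. W j s \<omega> = a}" by auto
      then show "real (card {i' \<in> nbhd U E i. W i' s \<omega> = a}) = (\<Sum>j\<in>nbhd U E i. (of_bool (W j s \<omega> = a) :: real))"
        using finite_nbhd[OF U] by (simp add: sum.If_cases)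
    qed
    have m: "(\<lambda>\<omega>. (of_bool (W j s \<omega> = a) :: real)) \<in> borel_measurable F" if "j \<in> nbhd U E i" for j
    proof -
      have [measurable]: "W j s \<in> measurable F (count_space UNIV)" using Wm[OF that s] .
      show ?thesis by measurable
    qed
    show ?thesis unfolding eq by (rule borel_measurable_sum) (rule m)
  qed
  show ?thesis unfolding expo_def
  proof (rule borel_measurable_prod)
    fix s assume s: "s \<in> {t - r..t} \<inter> {1..}"
    note [measurable] = c[OF s]
    show "(\<lambda>\<omega>. of_bool (1 - \<delta> \<le> real (card {i' \<in> nbhd U E i. W i' s \<omega> = a}) / real (card (nbhd U E i))) :: real) \<in> borel_measurable F"
      by measurable
  qed
qed

lemma restrict_eq_PiE:
  fixes K :: "'k set" and x :: "'k \<Rightarrow> bool" and f :: "'k \<Rightarrow> bool"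
  assumes x: "x \<in> K \<rightarrow>\<^sub>E UNIV"
  shows "restrict f K = x \<longleftrightarrow> (\<forall>k\<in>K. f k = x k)"
proof
  assume h: "\<forall>k\<in>K. f k = x k"
  have "restrict f K = restrict x K" using h by (intro restrict_ext) simp
  also have "\<dots> = x" using x by (rule PiE_restrict)
  finally show "restrict f K = x" .
next
  assume h: "restrict f K = x"
  show "\<forall>k\<in>K. f k = x k"
  proof
    fix k assume k: "k \<in> K"
    have "f k = restrict f K k" using k by simp
    then show "f k = x k" using h by simp
  qed
qed

lemma (in prob_space) coins_count:
  fixes Z :: "'k \<Rightarrow> 'a \<Rightarrow> bool"
  assumes ind: "indep_vars (\<lambda>_. count_space UNIV) Z K" and fin: "finite K" and ne: "K \<noteq> {}"
    and half: "\<And>k. k \<in> K \<Longrightarrow> prob {\<omega>\<in>space M. Z k \<omega>} = 1/2"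
  shows "prob {\<omega>\<in>space M. H (restrict (\<lambda>k. Z k \<omega>) K)}
         = real (card {x\<in>K \<rightarrow>\<^sub>E UNIV. H x}) * (1/2)^card K"
proof -
  have req: "restrict f K = x \<longleftrightarrow> (\<forall>k\<in>K. f k = x k)" if x: "x \<in> K \<rightarrow>\<^sub>E UNIV" for f x :: "'k \<Rightarrow> bool"
    by (rule restrict_eq_PiE[OF x])
  have rv: "Z k \<in> measurable M (count_space UNIV)" if "k\<in>K" for k
    using ind that unfolding indep_vars_def by blast
  have ev: "{\<omega>\<in>space M. Z k \<omega> = b} \<in> events" if "k\<in>K" for k b
  proof -
    have "{\<omega>\<in>space M. Z k \<omega> = b} = Z k -` {b} \<inter> space M" by auto
    then show ?thesis using measurable_sets[OF rv[OF that], of "{b}"] by simp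
  qed
  have pb: "prob {\<omega>\<in>space M. Z k \<omega> = b} = 1/2" if k: "k\<in>K" for k b
  proof (cases b)
    case True then show ?thesis using half[OF k] by simp
  next
    case False
    have "{\<omega>\<in>space M. Z k \<omega> = b} = space M - {\<omega>\<in>space M. Z k \<omega> = True}" using False by auto
    then have "prob {\<omega>\<in>space M. Z k \<omega> = b} = 1 - prob {\<omega>\<in>space M. Z k \<omega> = True}"
      using prob_compl[OF ev[OF k, of True]] by simp
    then show ?thesis using half[OF k] by simp
  qed
  have single: "prob {\<omega>\<in>space M. restrict (\<lambda>k. Z k \<omega>) K = x} = (1/2)^card K"
    if x: "x \<in> K \<rightarrow>\<^sub>E UNIV" for x
  proof -
    have seteq: "{\<omega>\<in>space M. restrict (\<lambda>k. Z k \<omega>) K = x} = (\<Inter>k\<in>K. {\<omega>\<in>space M. Z k \<omega> = x k})"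
    proof -
      have "restrict (\<lambda>k. Z k \<omega>) K = x \<longleftrightarrow> (\<forall>k\<in>K. Z k \<omega> = x k)" for \<omega>
        by (rule req[OF x])
      then show ?thesis using ne by auto
    qed
    have ie: "indep_events (\<lambda>k. {\<omega>\<in>space M. Z k \<omega> = x k}) K"
      by (rule indep_eventsI_indep_vars[OF ind]) auto
    have "prob (\<Inter>k\<in>K. {\<omega>\<in>space M. Z k \<omega> = x k}) = (\<Prod>k\<in>K. prob {\<omega>\<in>space M. Z k \<omega> = x k})"
      using ie fin ne unfolding indep_events_def by blast
    also have "\<dots> = (\<Prod>k\<in>K. 1/2)" using pb by (intro prod.cong) auto
    finally show ?thesis using seteq by simp
  qed
  define X where "X = {x\<in>K \<rightarrow>\<^sub>E UNIV. H x}"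
  have finX: "finite X" unfolding X_def by (rule finite_subset[OF _ finite_PiE[OF fin]]) auto
  have un: "{\<omega>\<in>space M. H (restrict (\<lambda>k. Z k \<omega>) K)} = (\<Union>x\<in>X. {\<omega>\<in>space M. restrict (\<lambda>k. Z k \<omega>) K = x})"
  proof -
    have R: "restrict (\<lambda>k. Z k \<omega>) K \<in> K \<rightarrow>\<^sub>E UNIV" for \<omega> by simp
    show ?thesis unfolding X_def using R by blast
  qed
  have evx: "{\<omega>\<in>space M. restrict (\<lambda>k. Z k \<omega>) K = x} \<in> events" if "x \<in> X" for x
  proof -
    have "x \<in> K \<rightarrow>\<^sub>E UNIV" using that unfolding X_def by auto
    then have "{\<omega>\<in>space M. restrict (\<lambda>k. Z k \<omega>) K = x} = (\<Inter>k\<in>K. {\<omega>\<in>space M. Z k \<omega> = x k})"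
      using ne req[of x] by auto
    moreover have "(\<Inter>k\<in>K. {\<omega>\<in>space M. Z k \<omega> = x k}) \<in> events"
      using ev fin ne by (intro sets.finite_INT) auto
    ultimately show ?thesis by simp
  qed
  have "prob {\<omega>\<in>space M. H (restrict (\<lambda>k. Z k \<omega>) K)} = prob (\<Union>x\<in>X. {\<omega>\<in>space M. restrict (\<lambda>k. Z k \<omega>) K = x})"
    by (simp only: un)
  also have "\<dots> = (\<Sum>x\<in>X. prob {\<omega>\<in>space M. restrict (\<lambda>k. Z k \<omega>) K = x})"
  proof (rule measure_finite_Union[OF finX])
    show "(\<lambda>x. {\<omega>\<in>space M. restrict (\<lambda>k. Z k \<omega>) K = x}) ` X \<subseteq> events" using evx by blast
    show "disjoint_family_on (\<lambda>x. {\<omega>\<in>space M. restrict (\<lambda>k. Z k \<omega>) K = x}) X"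
      unfolding disjoint_family_on_def by blast
    show "\<And>x. x \<in> X \<Longrightarrow> emeasure M {\<omega>\<in>space M. restrict (\<lambda>k. Z k \<omega>) K = x} \<noteq> \<infinity>"
      using emeasure_finite by simp
  qed
  also have "\<dots> = (\<Sum>x\<in>X. (1/2)^card K)"
  proof (rule sum.cong[OF refl])
    fix x assume "x \<in> X"
    then have "x \<in> K \<rightarrow>\<^sub>E UNIV" unfolding X_def by blast
    then show "prob {\<omega>\<in>space M. restrict (\<lambda>k. Z k \<omega>) K = x} = (1/2)^card K" by (rule single)
  qed
  also have "\<dots> = real (card X) * (1/2)^card K" by simp
  finally show ?thesis unfolding X_def .
qed

lemma negneg:
  fixes x :: "'k \<Rightarrow> bool"
  assumes x: "x \<in> K \<rightarrow>\<^sub>E UNIV"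
  shows "(\<lambda>k\<in>K. \<not> (\<lambda>k\<in>K. \<not> x k) k) = x"
proof -
  have "\<forall>k\<in>K. (\<not> (\<lambda>k\<in>K. \<not> x k) k) = x k" by simp
  then show ?thesis using restrict_eq_PiE[OF x, of "\<lambda>k. \<not> (\<lambda>k\<in>K. \<not> x k) k"] by simp
qed

lemma pexpo_sym:
  assumes M: "prob_space M" and U: "finite U" and Cl: "partition_on U Cl"
    and design: "clustered_switchback M U Cl T l W"
    and i: "i \<in> U" and t: "t \<in> {1..T}"
  shows "pexpo M U E \<delta> W r i t False = pexpo M U E \<delta> W r i t True"
proof -
  interpret prob_space M by (rule M)
  obtain A where indA: "indep_vars (\<lambda>_. count_space UNIV) (\<lambda>(C, b). A C b) (Cl \<times> block_of l ` {1..T})"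
    and halfA: "\<forall>C\<in>Cl. \<forall>b\<in>block_of l ` {1..T}. measure M {\<omega> \<in> space M. A C b \<omega>} = 1/2"
    and WA: "\<forall>C\<in>Cl. \<forall>i\<in>C. \<forall>t\<in>{1..T}. \<forall>\<omega>\<in>space M. W i t \<omega> = A C (block_of l t) \<omega>"
    using design unfolding clustered_switchback_def by blast
  define K where "K = Cl \<times> block_of l ` {1..T}"
  define Z where "Z = (\<lambda>(C, b). A C b)"
  have UCl: "\<Union>Cl = U" using Cl unfolding partition_on_def by blast
  have finK: "finite K" unfolding K_def using U UCl finite_UnionD by blast
  have neK: "K \<noteq> {}" unfolding K_def using i t UCl by blast
  have halfZ: "prob {\<omega>\<in>space M. Z k \<omega>} = 1/2" if "k \<in> K" for k
    using halfA that unfolding K_def Z_def by auto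
  have indZ: "indep_vars (\<lambda>_. count_space UNIV) Z K" using indA unfolding K_def Z_def .
  define cl where "cl j = (SOME C. C \<in> Cl \<and> j \<in> C)" for j
  have cl: "cl j \<in> Cl \<and> j \<in> cl j" if "j \<in> U" for j
  proof -
    have "\<exists>C. C \<in> Cl \<and> j \<in> C" using that UCl by blast
    then show ?thesis unfolding cl_def by (rule someI_ex)
  qed
  define N where "N = nbhd U E i"
  define win where "win = {t - r..t} \<inter> {1::nat..}"
  have NU: "N \<subseteq> U" unfolding N_def nbhd_def using i by auto
  have winT: "win \<subseteq> {1..T}" unfolding win_def using t by auto
  have kin: "(cl j, block_of l s) \<in> K" if "j \<in> N" "s \<in> win" for j s
    unfolding K_def using cl[of j] that NU winT by blast
  define Fa where "Fa a x = (\<Prod>s\<in>win. (of_bool (1 - \<delta> \<le> real (card {j \<in> N. x (cl j, block_of l s) = a}) / real (card N)) :: real))" for a :: bool and x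
  have eq: "expo U E \<delta> W r i t a \<omega> = Fa a (restrict (\<lambda>k. Z k \<omega>) K)" if w: "\<omega> \<in> space M" for \<omega> a
    unfolding expo_def Fa_def N_def[symmetric] win_def[symmetric]
  proof (rule prod.cong[OF refl])
    fix s assume s: "s \<in> win"
    have "{j \<in> N. W j s \<omega> = a} = {j \<in> N. restrict (\<lambda>k. Z k \<omega>) K (cl j, block_of l s) = a}"
    proof (rule Collect_cong)
      fix j
      show "(j \<in> N \<and> W j s \<omega> = a) = (j \<in> N \<and> restrict (\<lambda>k. Z k \<omega>) K (cl j, block_of l s) = a)"
      proof (cases "j \<in> N")
        case True
        have "W j s \<omega> = A (cl j) (block_of l s) \<omega>"
          using WA cl[of j] True NU s winT w by blast
        then show ?thesis using kin[OF True s] True by (simp add: Z_def)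
      qed simp
    qed
    then show "(of_bool (1 - \<delta> \<le> real (card {j \<in> N. W j s \<omega> = a}) / real (card N)) :: real) =
       of_bool (1 - \<delta> \<le> real (card {j \<in> N. restrict (\<lambda>k. Z k \<omega>) K (cl j, block_of l s) = a}) / real (card N))"
      by simp
  qed
  have neg: "Fa False x = Fa True (\<lambda>k\<in>K. \<not> x k)" for x
    unfolding Fa_def
  proof (rule prod.cong[OF refl])
    fix s assume s: "s \<in> win"
    have "{j \<in> N. x (cl j, block_of l s) = False} = {j \<in> N. (\<lambda>k\<in>K. \<not> x k) (cl j, block_of l s) = True}"
      using kin[OF _ s] by auto
    then show "(of_bool (1 - \<delta> \<le> real (card {j \<in> N. x (cl j, block_of l s) = False}) / real (card N)) :: real) =
       of_bool (1 - \<delta> \<le> real (card {j \<in> N. (\<lambda>k\<in>K. \<not> x k) (cl j, block_of l s) = True}) / real (card N))"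
      by simp
  qed
  have "pexpo M U E \<delta> W r i t False = prob {\<omega>\<in>space M. (\<lambda>y. Fa True (\<lambda>k\<in>K. \<not> y k) = 1) (restrict (\<lambda>k. Z k \<omega>) K)}"
    unfolding pexpo_def
  proof (intro arg_cong[where f=prob] Collect_cong conj_cong refl)
    fix \<omega> assume w: "\<omega> \<in> space M"
    show "(expo U E \<delta> W r i t False \<omega> = 1) = ((\<lambda>y. Fa True (\<lambda>k\<in>K. \<not> y k) = 1) (restrict (\<lambda>k. Z k \<omega>) K))"
      by (simp only: eq[OF w] neg)
  qed
  also have "\<dots> = real (card {x\<in>K \<rightarrow>\<^sub>E UNIV. Fa True (\<lambda>k\<in>K. \<not> x k) = 1}) * (1/2)^card K"
    by (rule coins_count[OF indZ finK neK halfZ])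
  also have "card {x\<in>K \<rightarrow>\<^sub>E UNIV. Fa True (\<lambda>k\<in>K. \<not> x k) = 1} = card {x\<in>K \<rightarrow>\<^sub>E UNIV. Fa True x = 1}"
  proof (rule bij_betw_same_card[of "\<lambda>x. \<lambda>k\<in>K. \<not> x k"], rule bij_betw_byWitness[where f'="\<lambda>x. \<lambda>k\<in>K. \<not> x k"])
    show "\<forall>a\<in>{x \<in> K \<rightarrow>\<^sub>E UNIV. Fa True (\<lambda>k\<in>K. \<not> x k) = 1}. (\<lambda>k\<in>K. \<not> (\<lambda>k\<in>K. \<not> a k) k) = a"
      using negneg by blast
    show "\<forall>a\<in>{x \<in> K \<rightarrow>\<^sub>E UNIV. Fa True x = 1}. (\<lambda>k\<in>K. \<not> (\<lambda>k\<in>K. \<not> a k) k) = a"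
      using negneg by blast
    show "(\<lambda>x. \<lambda>k\<in>K. \<not> x k) ` {x \<in> K \<rightarrow>\<^sub>E UNIV. Fa True (\<lambda>k\<in>K. \<not> x k) = 1} \<subseteq> {x \<in> K \<rightarrow>\<^sub>E UNIV. Fa True x = 1}"
      by auto
    show "(\<lambda>x. \<lambda>k\<in>K. \<not> x k) ` {x \<in> K \<rightarrow>\<^sub>E UNIV. Fa True x = 1} \<subseteq> {x \<in> K \<rightarrow>\<^sub>E UNIV. Fa True (\<lambda>k\<in>K. \<not> x k) = 1}"
    proof
      fix y assume "y \<in> (\<lambda>x. \<lambda>k\<in>K. \<not> x k) ` {x \<in> K \<rightarrow>\<^sub>E UNIV. Fa True x = 1}"
      then obtain x where x: "x \<in> K \<rightarrow>\<^sub>E UNIV" "Fa True x = 1" and y: "y = (\<lambda>k\<in>K. \<not> x k)" by blast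
      have "Fa True (\<lambda>k\<in>K. \<not> y k) = 1" unfolding y negneg[OF x(1)] by (rule x(2))
      moreover have "y \<in> K \<rightarrow>\<^sub>E UNIV" unfolding y by simp
      ultimately show "y \<in> {x \<in> K \<rightarrow>\<^sub>E UNIV. Fa True (\<lambda>k\<in>K. \<not> x k) = 1}" by blast
    qed
  qed
  also have "real (card {x\<in>K \<rightarrow>\<^sub>E UNIV. Fa True x = 1}) * (1/2)^card K = prob {\<omega>\<in>space M. (\<lambda>y. Fa True y = 1) (restrict (\<lambda>k. Z k \<omega>) K)}"
    by (rule coins_count[OF indZ finK neK halfZ, symmetric])
  also have "\<dots> = pexpo M U E \<delta> W r i t True"
    unfolding pexpo_def
  proof (intro arg_cong[where f=prob] Collect_cong conj_cong refl)
    fix \<omega> assume w: "\<omega> \<in> space M"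
    show "((\<lambda>y. Fa True y = 1) (restrict (\<lambda>k. Z k \<omega>) K)) = (expo U E \<delta> W r i t True \<omega> = 1)"
      by (simp only: eq[OF w])
  qed
  finally show ?thesis .
qed

lemma ar1: "\<bar>x::real\<bar> \<le> 1 + x\<^sup>2"
proof (cases "\<bar>x\<bar> \<le> 1")
  case True then show ?thesis by (smt (verit) zero_le_power2)
next
  case False
  then have "\<bar>x\<bar> * 1 \<le> \<bar>x\<bar> * \<bar>x\<bar>" by (intro mult_left_mono) auto
  then show ?thesis by (simp add: power2_eq_square abs_mult_self_eq)
qed
lemma ar2: "\<bar>(x::real) * y\<bar> \<le> x\<^sup>2 + y\<^sup>2"
proof -
  have "0 \<le> (\<bar>x\<bar> - \<bar>y\<bar>)\<^sup>2" by simp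
  also have "(\<bar>x\<bar> - \<bar>y\<bar>)\<^sup>2 = x\<^sup>2 - 2 * \<bar>x * y\<bar> + y\<^sup>2" by (simp add: power2_diff abs_mult)
  finally show ?thesis by simp
qed
lemma half_le: "0 \<le> B - 2 * A \<Longrightarrow> A \<le> B / (2::real)"
  by linarith
lemma half_le2: "C \<le> (P - a2 + (Q - b2)) / 2 \<Longrightarrow> 0 \<le> a2 \<Longrightarrow> 0 \<le> b2 \<Longrightarrow> C \<le> (P + Q) / (2::real)"
  by (simp add: field_simps)
lemma ar3: "(x::real)\<^sup>2 \<le> 2 * g \<Longrightarrow> 0 \<le> g"
  using zero_le_power2[of x] by linarith
lemma ar4: "(x::real)\<^sup>2 \<le> 2 * g \<Longrightarrow> y\<^sup>2 \<le> 2 * g' \<Longrightarrow> x * y \<le> g + g'"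
proof -
  assume a: "x\<^sup>2 \<le> 2 * g" "y\<^sup>2 \<le> 2 * g'"
  have "0 \<le> (x - y)\<^sup>2" by simp
  also have "(x - y)\<^sup>2 = x\<^sup>2 - 2 * (x * y) + y\<^sup>2" by (simp add: power2_diff)
  finally show ?thesis using a by linarith
qed

lemma (in prob_space) cov_bound:
  fixes X X' g g' :: "'a \<Rightarrow> real"
  assumes gi: "integrable M g" "integrable M g'"
    and b1: "\<And>\<omega>. \<omega> \<in> space M \<Longrightarrow> (X \<omega>)\<^sup>2 \<le> 2 * g \<omega>"
    and b2: "\<And>\<omega>. \<omega> \<in> space M \<Longrightarrow> (X' \<omega>)\<^sup>2 \<le> 2 * g' \<omega>"
  shows "covar M X X' \<le> integral\<^sup>L M g + integral\<^sup>L M g'"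
proof -
  have gnn: "0 \<le> g \<omega>" "0 \<le> g' \<omega>" if "\<omega> \<in> space M" for \<omega>
    using ar3[OF b1[OF that]] ar3[OF b2[OF that]] by auto
  have Ig: "0 \<le> integral\<^sup>L M g" "0 \<le> integral\<^sup>L M g'"
    using gnn by (auto intro: integral_nonneg)
  have pw: "X \<omega> * X' \<omega> \<le> g \<omega> + g' \<omega>" if w: "\<omega> \<in> space M" for \<omega>
    by (rule ar4[OF b1[OF w] b2[OF w]])
  show ?thesis
  proof (cases "X \<in> borel_measurable M \<and> X' \<in> borel_measurable M")
    case True
    then have mX[measurable]: "X \<in> borel_measurable M" and mX'[measurable]: "X' \<in> borel_measurable M" by auto
    have iX2: "integrable M (\<lambda>\<omega>. (X \<omega>)\<^sup>2)"
      by (rule Bochner_Integration.integrable_bound[OF Bochner_Integration.integrable_mult_right[OF gi(1), of 2]]) (auto simp: b1 gnn)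
    have iX2': "integrable M (\<lambda>\<omega>. (X' \<omega>)\<^sup>2)"
      by (rule Bochner_Integration.integrable_bound[OF Bochner_Integration.integrable_mult_right[OF gi(2), of 2]]) (auto simp: b2 gnn)
    have iX: "integrable M X"
    proof (rule Bochner_Integration.integrable_bound[OF Bochner_Integration.integrable_add[OF integrable_const[of 1] iX2]])
      show "X \<in> borel_measurable M" by simp
      show "AE x in M. norm (X x) \<le> norm (1 + (X x)\<^sup>2)"
      proof (rule AE_I2)
        fix x
        have "\<bar>X x\<bar> \<le> 1 + (X x)\<^sup>2" by (rule ar1)
        then show "norm (X x) \<le> norm (1 + (X x)\<^sup>2)" by simp
      qed
    qed
    have iX': "integrable M X'"
    proof (rule Bochner_Integration.integrable_bound[OF Bochner_Integration.integrable_add[OF integrable_const[of 1] iX2']])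
      show "X' \<in> borel_measurable M" by simp
      show "AE x in M. norm (X' x) \<le> norm (1 + (X' x)\<^sup>2)"
      proof (rule AE_I2)
        fix x
        have "\<bar>X' x\<bar> \<le> 1 + (X' x)\<^sup>2" by (rule ar1)
        then show "norm (X' x) \<le> norm (1 + (X' x)\<^sup>2)" by simp
      qed
    qed
    have iXX: "integrable M (\<lambda>\<omega>. X \<omega> * X' \<omega>)"
    proof (rule Bochner_Integration.integrable_bound[OF Bochner_Integration.integrable_add[OF iX2 iX2']])
      show "(\<lambda>\<omega>. X \<omega> * X' \<omega>) \<in> borel_measurable M" by simp
      show "AE x in M. norm (X x * X' x) \<le> norm ((X x)\<^sup>2 + (X' x)\<^sup>2)"
      proof (rule AE_I2)
        fix x
        have "\<bar>X x * X' x\<bar> \<le> (X x)\<^sup>2 + (X' x)\<^sup>2" by (rule ar2)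
        then show "norm (X x * X' x) \<le> norm ((X x)\<^sup>2 + (X' x)\<^sup>2)" by simp
      qed
    qed
    define a where "a = integral\<^sup>L M X"
    define b where "b = integral\<^sup>L M X'"
    have pw2: "X \<omega> * X' \<omega> - b * X \<omega> - a * X' \<omega> + a * b
        \<le> ((X \<omega>)\<^sup>2 - 2 * a * X \<omega> + a\<^sup>2 + ((X' \<omega>)\<^sup>2 - 2 * b * X' \<omega> + b\<^sup>2)) / 2" for \<omega>
    proof -
      have "0 \<le> ((X \<omega> - a) - (X' \<omega> - b))\<^sup>2" by simp
      also have "((X \<omega> - a) - (X' \<omega> - b))\<^sup>2 = (X \<omega>)\<^sup>2 - 2 * a * X \<omega> + a\<^sup>2 + ((X' \<omega>)\<^sup>2 - 2 * b * X' \<omega> + b\<^sup>2)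
          - 2 * (X \<omega> * X' \<omega> - b * X \<omega> - a * X' \<omega> + a * b)"
        by (simp add: power2_eq_square algebra_simps)
      finally show ?thesis by (rule half_le)
    qed
    have "integral\<^sup>L M (\<lambda>\<omega>. X \<omega> * X' \<omega> - b * X \<omega> - a * X' \<omega> + a * b)
        \<le> integral\<^sup>L M (\<lambda>\<omega>. ((X \<omega>)\<^sup>2 - 2 * a * X \<omega> + a\<^sup>2 + ((X' \<omega>)\<^sup>2 - 2 * b * X' \<omega> + b\<^sup>2)) / 2)"
      by (rule integral_mono) (use iX iX' iX2 iX2' iXX pw2 in auto)
    also have "integral\<^sup>L M (\<lambda>\<omega>. X \<omega> * X' \<omega> - b * X \<omega> - a * X' \<omega> + a * b) = integral\<^sup>L M (\<lambda>\<omega>. X \<omega> * X' \<omega>) - a * b"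
      using iX iX' iXX by (simp add: a_def b_def prob_space)
    also have "integral\<^sup>L M (\<lambda>\<omega>. ((X \<omega>)\<^sup>2 - 2 * a * X \<omega> + a\<^sup>2 + ((X' \<omega>)\<^sup>2 - 2 * b * X' \<omega> + b\<^sup>2)) / 2)
       = (integral\<^sup>L M (\<lambda>\<omega>. (X \<omega>)\<^sup>2) - a\<^sup>2 + (integral\<^sup>L M (\<lambda>\<omega>. (X' \<omega>)\<^sup>2) - b\<^sup>2)) / 2"
      using iX iX' iX2 iX2' by (simp add: a_def b_def power2_eq_square prob_space)
    finally have c1: "covar M X X' \<le> (integral\<^sup>L M (\<lambda>\<omega>. (X \<omega>)\<^sup>2) + integral\<^sup>L M (\<lambda>\<omega>. (X' \<omega>)\<^sup>2)) / 2"
      unfolding covar_def a_def[symmetric] b_def[symmetric] by (rule half_le2[OF _ zero_le_power2[of a] zero_le_power2[of b]])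
    have "integral\<^sup>L M (\<lambda>\<omega>. (X \<omega>)\<^sup>2) \<le> integral\<^sup>L M (\<lambda>\<omega>. 2 * g \<omega>)"
      by (rule integral_mono) (use iX2 gi b1 in auto)
    moreover have "integral\<^sup>L M (\<lambda>\<omega>. (X' \<omega>)\<^sup>2) \<le> integral\<^sup>L M (\<lambda>\<omega>. 2 * g' \<omega>)"
      by (rule integral_mono) (use iX2' gi b2 in auto)
    ultimately show ?thesis using c1 by simp
  next
    case False
    then have "integral\<^sup>L M X = 0 \<or> integral\<^sup>L M X' = 0"
      by (auto intro: not_integrable_integral_eq dest: borel_measurable_integrable)
    then have cv: "covar M X X' = integral\<^sup>L M (\<lambda>\<omega>. X \<omega> * X' \<omega>)" unfolding covar_def by auto
    show ?thesis
    proof (cases "integrable M (\<lambda>\<omega>. X \<omega> * X' \<omega>)")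
      case True
      have "integral\<^sup>L M (\<lambda>\<omega>. X \<omega> * X' \<omega>) \<le> integral\<^sup>L M (\<lambda>\<omega>. g \<omega> + g' \<omega>)"
        by (rule integral_mono) (use True gi pw in auto)
      then show ?thesis using cv gi by simp
    next
      case False
      then show ?thesis using cv Ig by (simp add: not_integrable_integral_eq)
    qed
  qed
qed

lemma gen_sigma_space: "space (gen_sigma M N X K) = space M"
  unfolding gen_sigma_def by (simp add: space_measure_of_conv)

lemma gen_sigma_gens_Pow: "{X k -` B \<inter> space M | k B. k \<in> K \<and> B \<in> sets N} \<subseteq> Pow (space M)"
  by auto

lemma gen_sigma_sets_eq: "sets (gen_sigma M N X K) = sigma_sets (space M) {X k -` B \<inter> space M | k B. k \<in> K \<and> B \<in> sets N}"
  unfolding gen_sigma_def by (rule sets_measure_of[OF gen_sigma_gens_Pow])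

lemma gen_sigma_sub:
  assumes "\<And>k. k \<in> K \<Longrightarrow> X k \<in> measurable M N"
  shows "sets (gen_sigma M N X K) \<subseteq> sets M"
  unfolding gen_sigma_sets_eq
  by (rule sets.sigma_sets_subset) (use assms measurable_sets in blast)

lemma gen_sigma_in:
  assumes "k \<in> K" "B \<in> sets N"
  shows "X k -` B \<inter> space M \<in> sets (gen_sigma M N X K)"
  unfolding gen_sigma_sets_eq using assms by (intro sigma_sets.Basic) blast

lemma (in prob_space) int01:
  assumes "f \<in> borel_measurable M" "\<And>\<omega>. f \<omega> = 0 \<or> f \<omega> = 1"
  shows "integral\<^sup>L M f = measure M {\<omega>\<in>space M. f \<omega> = 1}"
proof -
  have "integral\<^sup>L M f = integral\<^sup>L M (indicator {\<omega>\<in>space M. f \<omega> = 1})"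
  proof (rule Bochner_Integration.integral_cong[OF refl])
    fix \<omega> assume "\<omega> \<in> space M"
    then show "f \<omega> = indicator {\<omega> \<in> space M. f \<omega> = 1} \<omega>" using assms(2)[of \<omega>]
      by (auto simp: indicator_def)
  qed
  also have "\<dots> = measure M {\<omega>\<in>space M. f \<omega> = 1}"
    by (simp add: Int_absorb2)
  finally show ?thesis .
qed

lemma sq01: "(a::real) = 0 \<or> a = 1 \<Longrightarrow> b = 0 \<or> b = 1 \<Longrightarrow> (a - b)\<^sup>2 \<le> a + b"
  by auto

lemma sq01b: "(a::real) = 0 \<or> a = 1 \<Longrightarrow> b = 0 \<or> b = 1 \<Longrightarrow> (a - b)\<^sup>2 \<le> 1"
  by auto

lemma Ysq: "0 \<le> (m::real) \<Longrightarrow> m \<le> 1 \<Longrightarrow> (m + e)\<^sup>2 \<le> 2 + 2 * (e * e)"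
proof -
  assume m: "0 \<le> m" "m \<le> 1"
  have "m * m \<le> 1" using m by (simp add: mult_le_one)
  moreover have "0 \<le> (m - e)\<^sup>2" by simp
  moreover have "(m + e)\<^sup>2 + (m - e)\<^sup>2 = 2 * (m * m) + 2 * (e * e)"
    by (simp add: power2_eq_square algebra_simps)
  ultimately show ?thesis by linarith
qed

lemma key_bound:
  fixes M :: "'w measure"
    and U :: "'a set" and E :: "'a \<Rightarrow> 'a \<Rightarrow> bool"
    and Cl :: "'a set set" and T l r :: nat and \<delta> \<sigma> :: real
    and SS :: "'s measure"
    and W :: "'a \<Rightarrow> nat \<Rightarrow> 'w \<Rightarrow> bool"
    and S :: "'a \<Rightarrow> nat \<Rightarrow> 'w \<Rightarrow> 's"
    and eps :: "'a \<Rightarrow> nat \<Rightarrow> 'w \<Rightarrow> real"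
    and mu :: "'a \<Rightarrow> nat \<Rightarrow> 's \<Rightarrow> ('a \<Rightarrow> bool) \<Rightarrow> real"
    and i :: 'a and t :: nat
  assumes M: "prob_space M"
    and U: "finite U"
    and Cl: "partition_on U Cl"
    and W_meas: "\<And>j s. j \<in> U \<Longrightarrow> s \<in> {1..T} \<Longrightarrow> W j s \<in> measurable M (count_space UNIV)"
    and S_meas: "\<And>j s. j \<in> U \<Longrightarrow> s \<in> {1..T} \<Longrightarrow> S j s \<in> measurable M SS"
    and eps_meas: "\<And>j s. j \<in> U \<Longrightarrow> s \<in> {1..T} \<Longrightarrow> eps j s \<in> borel_measurable M"
    and design: "clustered_switchback M U Cl T l W"
    and mu_range: "\<And>j s x w. 0 \<le> mu j s x w \<and> mu j s x w \<le> 1"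
    and noise_cov: "\<And>j s j' s'. j \<in> U \<Longrightarrow> s \<in> {1..T} \<Longrightarrow> j' \<in> U \<Longrightarrow> s' \<in> {1..T} \<Longrightarrow>
          integrable M (\<lambda>\<omega>. eps j s \<omega> * eps j' s' \<omega>) \<and>
          (AE \<omega> in M. real_cond_exp M
              (sigma (space M)
                 (sets (gen_sigma M (count_space UNIV) (\<lambda>(k, u). W k u) (U \<times> {1..T}))
                  \<union> sets (gen_sigma M SS (\<lambda>(k, u). S k u) (U \<times> {1..T}))))
              (\<lambda>\<omega>'. eps j s \<omega>' * eps j' s' \<omega>') \<omega> \<le> \<sigma>\<^sup>2 * of_bool (j = j' \<and> s = s'))"
    and i: "i \<in> U" and t: "t \<in> {1..T}"
    and ppos: "0 < pexpo M U E \<delta> W r i t True"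
  shows "\<exists>g. integrable M g \<and> integral\<^sup>L M g \<le> 2 * (1 + \<sigma>\<^sup>2) / pexpo M U E \<delta> W r i t True
           \<and> (\<forall>\<omega>\<in>space M. (ht_est M U E \<delta> mu S W eps r i t \<omega>)\<^sup>2 \<le> 2 * g \<omega>)"
proof -
  interpret prob_space M by (rule M)
  define p where "p = pexpo M U E \<delta> W r i t True"
  have p0: "pexpo M U E \<delta> W r i t False = p"
    unfolding p_def by (rule pexpo_sym[OF M U Cl design i t])
  have pp: "0 < p" using ppos unfolding p_def .
  define X1 where "X1 = expo U E \<delta> W r i t True"
  define X0 where "X0 = expo U E \<delta> W r i t False"
  define G1 where "G1 = gen_sigma M (count_space UNIV) (\<lambda>(k, u). W k u) (U \<times> {1..T})"
  define G2 where "G2 = gen_sigma M SS (\<lambda>(k, u). S k u) (U \<times> {1..T})"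
  define F where "F = sigma (space M) (sets G1 \<union> sets G2)"
  have G1M: "sets G1 \<subseteq> sets M" unfolding G1_def
    by (rule gen_sigma_sub) (use W_meas in auto)
  have G2M: "sets G2 \<subseteq> sets M" unfolding G2_def
    by (rule gen_sigma_sub) (use S_meas in auto)
  have GPow: "sets G1 \<union> sets G2 \<subseteq> Pow (space M)"
    using G1M G2M sets.sets_into_space by blast
  have setsF: "sets F = sigma_sets (space M) (sets G1 \<union> sets G2)"
    unfolding F_def by (rule sets_measure_of[OF GPow])
  have spaceF: "space F = space M" unfolding F_def by (simp add: space_measure_of_conv)
  have subalg: "subalgebra M F"
    unfolding subalgebra_def spaceF setsF using G1M G2M
    by (auto intro!: sets.sigma_sets_subset)
  interpret fms: finite_measure_subalgebra M F
    by unfold_locales (rule subalg)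
  have WF: "W j s \<in> measurable F (count_space UNIV)" if "j \<in> U" "s \<in> {1..T}" for j s
  proof (rule measurableI)
    fix A :: "bool set" assume "A \<in> sets (count_space UNIV)"
    have "W j s -` A \<inter> space M \<in> sets G1"
      using gen_sigma_in[of "(j, s)" "U \<times> {1..T}" A "count_space UNIV" "\<lambda>(k, u). W k u" M] that
      unfolding G1_def by simp
    then show "W j s -` A \<inter> space F \<in> sets F"
      unfolding spaceF setsF by (auto intro: sigma_sets.Basic)
  qed simp
  have NU: "nbhd U E i \<subseteq> U" unfolding nbhd_def using i by auto
  have winT: "{t - r..t} \<inter> {1..} \<subseteq> {1..T}" using t by auto
  have X1F[measurable]: "X1 \<in> borel_measurable F" unfolding X1_def
    by (rule expo_meas[OF U]) (use WF NU winT in blast)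
  have X0F[measurable]: "X0 \<in> borel_measurable F" unfolding X0_def
    by (rule expo_meas[OF U]) (use WF NU winT in blast)
  have X1M[measurable]: "X1 \<in> borel_measurable M" by (rule measurable_from_subalg[OF subalg X1F])
  have X0M[measurable]: "X0 \<in> borel_measurable M" by (rule measurable_from_subalg[OF subalg X0F])
  have X1v: "X1 \<omega> = 0 \<or> X1 \<omega> = 1" for \<omega> unfolding X1_def by (rule expo_01)
  have X0v: "X0 \<omega> = 0 \<or> X0 \<omega> = 1" for \<omega> unfolding X0_def by (rule expo_01)
  define c where "c \<omega> = ((X1 \<omega> - X0 \<omega>) / p)\<^sup>2" for \<omega>
  have cF[measurable]: "c \<in> borel_measurable F" unfolding c_def by measurable
  have cM[measurable]: "c \<in> borel_measurable M" by (rule measurable_from_subalg[OF subalg cF])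
  have c_nn: "0 \<le> c \<omega>" for \<omega> unfolding c_def by simp
  have c_eq: "c \<omega> = (X1 \<omega> - X0 \<omega>)\<^sup>2 / p\<^sup>2" for \<omega> unfolding c_def by (simp add: power_divide)
  have c_le1: "c \<omega> \<le> 1 / p\<^sup>2" for \<omega>
    unfolding c_eq using sq01b[OF X1v X0v] pp by (simp add: divide_right_mono)
  have c_le2: "c \<omega> \<le> (X1 \<omega> + X0 \<omega>) / p\<^sup>2" for \<omega>
    unfolding c_eq using sq01[OF X1v X0v] pp by (simp add: divide_right_mono)
  define e2 where "e2 \<omega> = eps i t \<omega> * eps i t \<omega>" for \<omega>
  have e2M[measurable]: "e2 \<in> borel_measurable M" unfolding e2_def using eps_meas[OF i t] by measurable
  have e2i: "integrable M e2" unfolding e2_def using noise_cov[OF i t i t] by simp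
  have e2AE: "AE \<omega> in M. real_cond_exp M F e2 \<omega> \<le> \<sigma>\<^sup>2"
    using noise_cov[OF i t i t] unfolding F_def G1_def G2_def e2_def by simp
  have ci: "integrable M c"
  proof (rule Bochner_Integration.integrable_bound[OF integrable_const[of "1 / p\<^sup>2"]])
    show "c \<in> borel_measurable M" by simp
    show "AE x in M. norm (c x) \<le> norm (1 / p\<^sup>2)" using c_le1 c_nn by (auto intro!: AE_I2)
  qed
  have cei: "integrable M (\<lambda>\<omega>. c \<omega> * e2 \<omega>)"
  proof (rule Bochner_Integration.integrable_bound[OF Bochner_Integration.integrable_mult_right[OF e2i, of "1 / p\<^sup>2"]])
    show "(\<lambda>\<omega>. c \<omega> * e2 \<omega>) \<in> borel_measurable M" by simp
    show "AE x in M. norm (c x * e2 x) \<le> norm (1 / p\<^sup>2 * e2 x)"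
    proof (rule AE_I2)
      fix x
      have "\<bar>c x\<bar> * \<bar>e2 x\<bar> \<le> (1 / p\<^sup>2) * \<bar>e2 x\<bar>"
        using c_le1[of x] c_nn[of x] by (intro mult_right_mono) auto
      then show "norm (c x * e2 x) \<le> norm (1 / p\<^sup>2 * e2 x)" by (simp add: abs_mult)
    qed
  qed
  have ce_eq: "integral\<^sup>L M (\<lambda>\<omega>. c \<omega> * real_cond_exp M F e2 \<omega>) = integral\<^sup>L M (\<lambda>\<omega>. c \<omega> * e2 \<omega>)"
    and crei: "integrable M (\<lambda>\<omega>. c \<omega> * real_cond_exp M F e2 \<omega>)"
    using fms.real_cond_exp_intg[OF cei cF e2M] by auto
  have "integral\<^sup>L M (\<lambda>\<omega>. c \<omega> * e2 \<omega>) \<le> integral\<^sup>L M (\<lambda>\<omega>. c \<omega> * \<sigma>\<^sup>2)"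
    unfolding ce_eq[symmetric]
  proof (rule integral_mono_AE[OF crei])
    show "integrable M (\<lambda>\<omega>. c \<omega> * \<sigma>\<^sup>2)" using ci by simp
    show "AE x in M. c x * real_cond_exp M F e2 x \<le> c x * \<sigma>\<^sup>2"
      using e2AE by eventually_elim (use c_nn in \<open>auto intro: mult_left_mono\<close>)
  qed
  then have ce_le: "integral\<^sup>L M (\<lambda>\<omega>. c \<omega> * e2 \<omega>) \<le> \<sigma>\<^sup>2 * integral\<^sup>L M c" by (simp add: mult.commute)
  have IX1: "integral\<^sup>L M X1 = p"
    by (simp only: int01[OF X1M X1v]) (simp add: p_def X1_def pexpo_def)
  have IX0: "integral\<^sup>L M X0 = p"
    by (simp only: int01[OF X0M X0v] p0[symmetric]) (simp add: X0_def pexpo_def)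
  have X1i: "integrable M X1"
    by (rule Bochner_Integration.integrable_bound[OF integrable_const[of "1::real"] X1M])
       (rule AE_I2, metis X1v abs_0 abs_1 norm_of_real order_refl zero_le_one real_norm_def)
  have X0i: "integrable M X0"
    by (rule Bochner_Integration.integrable_bound[OF integrable_const[of "1::real"] X0M])
       (rule AE_I2, metis X0v abs_0 abs_1 norm_of_real order_refl zero_le_one real_norm_def)
  have "integral\<^sup>L M c \<le> integral\<^sup>L M (\<lambda>\<omega>. (X1 \<omega> + X0 \<omega>) / p\<^sup>2)"
    by (rule integral_mono) (use ci c_le2 X1i X0i in auto)
  also have "\<dots> = (p + p) / p\<^sup>2"
    using IX1 IX0 X1i X0i by simp
  also have "\<dots> = 2 / p" using pp by (simp add: power2_eq_square field_simps)
  finally have c_int: "integral\<^sup>L M c \<le> 2 / p" .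
  define g where "g \<omega> = c \<omega> + c \<omega> * e2 \<omega>" for \<omega>
  have gi: "integrable M g" unfolding g_def using ci cei by simp
  have "integral\<^sup>L M g = integral\<^sup>L M c + integral\<^sup>L M (\<lambda>\<omega>. c \<omega> * e2 \<omega>)"
    unfolding g_def using ci cei by simp
  also have "\<dots> \<le> (1 + \<sigma>\<^sup>2) * integral\<^sup>L M c" using ce_le by (simp add: algebra_simps)
  also have "\<dots> \<le> (1 + \<sigma>\<^sup>2) * (2 / p)"
    by (rule mult_left_mono[OF c_int]) (simp add: add_nonneg_nonneg)
  finally have g_int: "integral\<^sup>L M g \<le> 2 * (1 + \<sigma>\<^sup>2) / p" by (simp add: mult.commute)
  have pw: "(ht_est M U E \<delta> mu S W eps r i t \<omega>)\<^sup>2 \<le> 2 * g \<omega>" for \<omega>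
  proof -
    define m where "m = mu i t (S i t \<omega>) (wN U E W i t \<omega>)"
    have ht: "ht_est M U E \<delta> mu S W eps r i t \<omega> = (X1 \<omega> - X0 \<omega>) / p * (m + eps i t \<omega>)"
      unfolding ht_est_def p0 p_def[symmetric] X1_def[symmetric] X0_def[symmetric] outcome_def m_def[symmetric]
      by (simp add: diff_divide_distrib left_diff_distrib)
    have "(ht_est M U E \<delta> mu S W eps r i t \<omega>)\<^sup>2 = c \<omega> * (m + eps i t \<omega>)\<^sup>2"
      unfolding ht c_def by (simp add: power_mult_distrib power_divide)
    also have "\<dots> \<le> c \<omega> * (2 + 2 * e2 \<omega>)"
      unfolding e2_def using Ysq[of m "eps i t \<omega>"] mu_range[of i t "S i t \<omega>" "wN U E W i t \<omega>"] c_nn[of \<omega>]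
      by (intro mult_left_mono) (auto simp: m_def)
    also have "\<dots> = 2 * g \<omega>" unfolding g_def by (simp add: algebra_simps)
    finally show ?thesis .
  qed
  show ?thesis using gi g_int pw unfolding p_def by blast
qed

lemma final_arith:
  fixes p p' K :: real
  assumes "0 < p" "p \<le> 1" "0 < p'" "p' \<le> 1" "0 \<le> K"
  shows "2 * K / p + 2 * K / p' \<le> 4 * K / (p * p')"
proof -
  have "2 * K / p + 2 * K / p' = (2 * K * (p + p')) / (p * p')"
    using assms by (simp add: field_simps)
  also have "\<dots> \<le> (2 * K * 2) / (p * p')"
    using assms by (intro divide_right_mono mult_left_mono) auto
  finally show ?thesis by simp
qed

theorem mainTheorem10:
  fixes M :: "'w measure"
    and U :: "'a set" and E :: "'a \<Rightarrow> 'a \<Rightarrow> bool"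
    and Cl :: "'a set set" and T l r :: nat and \<delta> \<sigma> :: real
    and SS :: "'s measure"
    and W :: "'a \<Rightarrow> nat \<Rightarrow> 'w \<Rightarrow> bool"
    and S :: "'a \<Rightarrow> nat \<Rightarrow> 'w \<Rightarrow> 's"
    and eps :: "'a \<Rightarrow> nat \<Rightarrow> 'w \<Rightarrow> real"
    and P :: "'a \<Rightarrow> nat \<Rightarrow> ('a \<Rightarrow> bool) \<Rightarrow> 's \<Rightarrow> 's measure"
    and mu :: "'a \<Rightarrow> nat \<Rightarrow> 's \<Rightarrow> ('a \<Rightarrow> bool) \<Rightarrow> real"
    and i i' :: 'a and t t' :: nat
  assumes M: "prob_space M"
    and U: "finite U"
    and E_sym: "\<And>x y. E x y \<longleftrightarrow> E y x"
    and Cl: "partition_on U Cl"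
    and l: "l \<ge> 1"
    and \<delta>: "0 \<le> \<delta>" "\<delta> < 1"
    and W_meas: "\<And>j s. j \<in> U \<Longrightarrow> s \<in> {1..T} \<Longrightarrow> W j s \<in> measurable M (count_space UNIV)"
    and S_meas: "\<And>j s. j \<in> U \<Longrightarrow> s \<in> {1..T} \<Longrightarrow> S j s \<in> measurable M SS"
    and eps_meas: "\<And>j s. j \<in> U \<Longrightarrow> s \<in> {1..T} \<Longrightarrow> eps j s \<in> borel_measurable M"
    and design: "clustered_switchback M U Cl T l W"
    and W_indep: "prob_space.indep_set M
          (sets (gen_sigma M (count_space UNIV) (\<lambda>(j, s). W j s) (U \<times> {1..T})))
          (sets (gen_sigma M SS (\<lambda>j. S j 1) U))"
    and P_kernel: "\<And>j s w x. prob_space (P j s w x) \<and> sets (P j s w x) = sets SS"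
    and markov: "\<And>j s B. j \<in> U \<Longrightarrow> s \<in> {1..<T} \<Longrightarrow> B \<in> sets SS \<Longrightarrow>
          AE \<omega> in M. real_cond_exp M
              (sigma (space M)
                 (sets (gen_sigma M (count_space UNIV) (\<lambda>(k, u). W k u) (U \<times> {1..T}))
                  \<union> sets (gen_sigma M SS (\<lambda>(k, u). S k u) (U \<times> {1..s}))))
              (indicator {\<omega>' \<in> space M. S j (Suc s) \<omega>' \<in> B}) \<omega>
            = measure (P j s (wN U E W j s \<omega>) (S j s \<omega>)) B"
    and mu_range: "\<And>j s x w. 0 \<le> mu j s x w \<and> mu j s x w \<le> 1"
    and noise_mean: "\<And>j s. j \<in> U \<Longrightarrow> s \<in> {1..T} \<Longrightarrow>
          integrable M (eps j s) \<and>
          (AE \<omega> in M. real_cond_exp M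
              (sigma (space M)
                 (sets (gen_sigma M (count_space UNIV) (\<lambda>(k, u). W k u) (U \<times> {1..T}))
                  \<union> sets (gen_sigma M SS (\<lambda>(k, u). S k u) (U \<times> {1..T}))))
              (eps j s) \<omega> = 0)"
    and noise_cov: "\<And>j s j' s'. j \<in> U \<Longrightarrow> s \<in> {1..T} \<Longrightarrow> j' \<in> U \<Longrightarrow> s' \<in> {1..T} \<Longrightarrow>
          integrable M (\<lambda>\<omega>. eps j s \<omega> * eps j' s' \<omega>) \<and>
          (AE \<omega> in M. real_cond_exp M
              (sigma (space M)
                 (sets (gen_sigma M (count_space UNIV) (\<lambda>(k, u). W k u) (U \<times> {1..T}))
                  \<union> sets (gen_sigma M SS (\<lambda>(k, u). S k u) (U \<times> {1..T}))))
              (\<lambda>\<omega>'. eps j s \<omega>' * eps j' s' \<omega>') \<omega> \<le> \<sigma>\<^sup>2 * of_bool (j = j' \<and> s = s'))"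
    and i: "i \<in> U" "i' \<in> U"
    and t: "t \<in> {1..T}" "t' \<in> {1..T}"
  shows "covar M (ht_est M U E \<delta> mu S W eps r i t) (ht_est M U E \<delta> mu S W eps r i' t')
         \<le> 4 * (1 + \<sigma>\<^sup>2) / (pexpo M U E \<delta> W r i t True * pexpo M U E \<delta> W r i' t' True)"
proof -
  interpret prob_space M by (rule M)
  define p where "p = pexpo M U E \<delta> W r i t True"
  define p' where "p' = pexpo M U E \<delta> W r i' t' True"
  have p_nn: "0 \<le> p" "p \<le> 1" "0 \<le> p'" "p' \<le> 1" unfolding p_def p'_def pexpo_def by auto
  have s1: "pexpo M U E \<delta> W r i t False = p"
    unfolding p_def by (rule pexpo_sym[OF M U Cl design i(1) t(1)])
  have s2: "pexpo M U E \<delta> W r i' t' False = p'"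
    unfolding p'_def by (rule pexpo_sym[OF M U Cl design i(2) t(2)])
  show ?thesis
  proof (cases "p = 0 \<or> p' = 0")
    case True
    then have "4 * (1 + \<sigma>\<^sup>2) / (p * p') = 0" by auto
    then have rhs: "4 * (1 + \<sigma>\<^sup>2) / (pexpo M U E \<delta> W r i t True * pexpo M U E \<delta> W r i' t' True) = 0"
      unfolding p_def p'_def .
    from True show ?thesis
    proof
      assume p0: "p = 0"
      have "ht_est M U E \<delta> mu S W eps r i t = (\<lambda>\<omega>. 0)"
        unfolding ht_est_def s1 p_def[symmetric] p0 by simp
      then have cv: "covar M (ht_est M U E \<delta> mu S W eps r i t) (ht_est M U E \<delta> mu S W eps r i' t') = 0"
        unfolding covar_def by simp
      show ?thesis unfolding rhs cv by simp
    next
      assume p0: "p' = 0"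
      have "ht_est M U E \<delta> mu S W eps r i' t' = (\<lambda>\<omega>. 0)"
        unfolding ht_est_def s2 p'_def[symmetric] p0 by simp
      then have cv: "covar M (ht_est M U E \<delta> mu S W eps r i t) (ht_est M U E \<delta> mu S W eps r i' t') = 0"
        unfolding covar_def by simp
      show ?thesis unfolding rhs cv by simp
    qed
  next
    case False
    then have pp: "0 < p" "0 < p'" using p_nn by auto
    have pp1: "0 < pexpo M U E \<delta> W r i t True" using pp(1) unfolding p_def .
    have pp2: "0 < pexpo M U E \<delta> W r i' t' True" using pp(2) unfolding p'_def .
    have kb1: "\<exists>g. integrable M g \<and> integral\<^sup>L M g \<le> 2 * (1 + \<sigma>\<^sup>2) / pexpo M U E \<delta> W r i t True
           \<and> (\<forall>\<omega>\<in>space M. (ht_est M U E \<delta> mu S W eps r i t \<omega>)\<^sup>2 \<le> 2 * g \<omega>)"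
      by (rule key_bound[OF M U Cl W_meas S_meas eps_meas design mu_range noise_cov i(1) t(1) pp1]) auto
    have kb2: "\<exists>g. integrable M g \<and> integral\<^sup>L M g \<le> 2 * (1 + \<sigma>\<^sup>2) / pexpo M U E \<delta> W r i' t' True
           \<and> (\<forall>\<omega>\<in>space M. (ht_est M U E \<delta> mu S W eps r i' t' \<omega>)\<^sup>2 \<le> 2 * g \<omega>)"
      by (rule key_bound[OF M U Cl W_meas S_meas eps_meas design mu_range noise_cov i(2) t(2) pp2]) auto
    from kb1 obtain g where g: "integrable M g" "integral\<^sup>L M g \<le> 2 * (1 + \<sigma>\<^sup>2) / p"
      "\<forall>\<omega>\<in>space M. (ht_est M U E \<delta> mu S W eps r i t \<omega>)\<^sup>2 \<le> 2 * g \<omega>"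
      unfolding p_def by (elim exE conjE)
    from kb2 obtain g' where g': "integrable M g'" "integral\<^sup>L M g' \<le> 2 * (1 + \<sigma>\<^sup>2) / p'"
      "\<forall>\<omega>\<in>space M. (ht_est M U E \<delta> mu S W eps r i' t' \<omega>)\<^sup>2 \<le> 2 * g' \<omega>"
      unfolding p'_def by (elim exE conjE)
    have "covar M (ht_est M U E \<delta> mu S W eps r i t) (ht_est M U E \<delta> mu S W eps r i' t')
        \<le> integral\<^sup>L M g + integral\<^sup>L M g'"
      by (rule cov_bound[OF g(1) g'(1)]) (use g(3) g'(3) in blast)+
    also have "\<dots> \<le> 2 * (1 + \<sigma>\<^sup>2) / p + 2 * (1 + \<sigma>\<^sup>2) / p'" using g(2) g'(2) by linarith
    also have "\<dots> \<le> 4 * (1 + \<sigma>\<^sup>2) / (p * p')"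
      by (rule final_arith) (use pp p_nn in auto)
    finally show ?thesis unfolding p_def p'_def .
  qed
qed

end
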